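(* Let $f\in\mathbb{C}[X,Y]$ be a quasi-convenient polynomial which is nondegenerate at infinity, and let $g,h\in\mathbb{C}[X,Y]$ be polynomials of positive degree that are coprime and both divide $f$ in $\mathbb{C}[X,Y]$. Then $g$ and $h$ are quasi-convenient and the pair $(g,h)$ is nondegenerate at infinity.
   Context: Write $f=\sum c_{\alpha\beta}X^\alpha Y^\beta\in\mathbb{C}[X,Y]$ and $\operatorname{supp} f=\{(\alpha,\beta)\in\mathbb{N}^2: c_{\alpha\beta}\neq 0\}$. A nonzero polynomial $f$ of positive degree is quasi-convenient if $c_{\alpha 0}\neq 0$ and $c_{0\beta}\neq 0$ for some integers $\alpha,\beta\ge 0$. For a nonzero real vector $\vec w=[p,q]$, let $d_{\vec w}(f)=\max\{p\alpha+q\beta:(\alpha,\beta)\in\operatorname{supp} f\}$ and $\operatorname{in}(f,\vec w)=\sum_{p\alpha+q\beta=d_{\vec w}(f)} c_{\alpha\beta}X^\alpha Y^\beta$. A quasi-convenient $f$ is nondegenerate at infinity if for every real vector $\vec w=[p,q]$ with $p>0$ or $q>0$ the system $\operatorname{in}(f,\vec w)=\frac{\partial}{\partial X}\operatorname{in}(f,\vec w)=\frac{\partial}{\partial Y}\operatorname{in}(f,\vec w)=0$ has no solutions in $\mathbb{C}^*\times\mathbb{C}^*$, where $\mathbb{C}^*=\mathbb{C}\setminus\{0\}$. A pair $(g,h)$ of quasi-convenient polynomials is nondegenerate at infinity if for every real vector $\vec w=[p,q]$ with $p>0$ or $q>0$ the system $\operatorname{in}(g,\vec w)=\operatorname{in}(h,\vec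 w)=0$ has no solutions in $\mathbb{C}^*\times\mathbb{C}^*$. *)

theory Defs
  imports "HOL-Computational_Algebra.Computational_Algebra"
begin

text \<open>Bivariate polynomials C[X,Y] are represented as complex poly poly = (C[X])[Y]:
  the coefficient c_{alpha beta} of X^alpha Y^beta in f is coeff (coeff f beta) alpha.\<close>

type_synonym bipoly = "complex poly poly"

definition bcoeff :: "bipoly \<Rightarrow> nat \<Rightarrow> nat \<Rightarrow> complex" where
  "bcoeff f a b = coeff (coeff f b) a"

definition bsupp :: "bipoly \<Rightarrow> (nat \<times> nat) set" where
  "bsupp f = {(a, b). bcoeff f a b \<noteq> 0}"

definition bmonom :: "complex \<Rightarrow> nat \<Rightarrow> nat \<Rightarrow> bipoly" where
  "bmonom c a b = monom (monom c a) b"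

definition beval :: "bipoly \<Rightarrow> complex \<Rightarrow> complex \<Rightarrow> complex" where
  "beval f x y = poly (map_poly (\<lambda>p. poly p x) f) y"

definition dX :: "bipoly \<Rightarrow> bipoly" where
  "dX f = map_poly pderiv f"

definition dY :: "bipoly \<Rightarrow> bipoly" where
  "dY f = pderiv f"

definition pos_degree :: "bipoly \<Rightarrow> bool" where
  "pos_degree f \<longleftrightarrow> (\<exists>(a, b) \<in> bsupp f. a + b > 0)"

definition quasi_convenient :: "bipoly \<Rightarrow> bool" where
  "quasi_convenient f \<longleftrightarrow> f \<noteq> 0 \<and> pos_degree f \<and>
     (\<exists>a. bcoeff f a 0 \<noteq> 0) \<and> (\<exists>b. bcoeff f 0 b \<noteq> 0)"

definition wdeg :: "bipoly \<Rightarrow> real \<Rightarrow> real \<Rightarrow> real" where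
  "wdeg f p q = Max ((\<lambda>(a, b). p * real a + q * real b) ` bsupp f)"

definition initial :: "bipoly \<Rightarrow> real \<Rightarrow> real \<Rightarrow> bipoly" where
  "initial f p q = (\<Sum>(a, b) \<in> bsupp f.
      if p * real a + q * real b = wdeg f p q then bmonom (bcoeff f a b) a b else 0)"

definition nondeg_infty :: "bipoly \<Rightarrow> bool" where
  "nondeg_infty f \<longleftrightarrow> quasi_convenient f \<and>
     (\<forall>p q :: real. p > 0 \<or> q > 0 \<longrightarrow>
        \<not> (\<exists>x y. x \<noteq> 0 \<and> y \<noteq> 0 \<and> beval (initial f p q) x y = 0 \<and>
              beval (dX (initial f p q)) x y = 0 \<and> beval (dY (initial f p q)) x y = 0))"

definition pair_nondeg_infty :: "bipoly \<Rightarrow> bipoly \<Rightarrow> bool" where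
  "pair_nondeg_infty g h \<longleftrightarrow> quasi_convenient g \<and> quasi_convenient h \<and>
     (\<forall>p q :: real. p > 0 \<or> q > 0 \<longrightarrow>
        \<not> (\<exists>x y. x \<noteq> 0 \<and> y \<noteq> 0 \<and> beval (initial g p q) x y = 0 \<and>
              beval (initial h p q) x y = 0))"

end

theory Submission
  imports Defs "HOL-Computational_Algebra.Field_as_Ring"
begin

lemma pderiv_sum': "pderiv (sum f A) = (\<Sum>x\<in>A. pderiv (f x))"
  by (induction A rule: infinite_finite_induct) (simp_all add: pderiv_add)

lemma bcoeff_mult:
  "bcoeff (f*g) a b = (\<Sum>j\<le>b. \<Sum>i\<le>a. bcoeff f i j * bcoeff g (a-i) (b-j))"
  by (simp add: bcoeff_def coeff_mult coeff_sum)

lemma bipoly_eqI: "(\<And>a b. bcoeff f a b = bcoeff g a b) \<Longrightarrow> f = g"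
  by (simp add: bcoeff_def poly_eq_iff)

lemma bcoeff_0 [simp]: "bcoeff 0 a b = 0" by (simp add: bcoeff_def)

lemma bsupp_finite: "finite (bsupp f)"
proof -
  let ?M = "Max ((\<lambda>j. degree (coeff f j)) ` {..degree f})"
  have "bsupp f \<subseteq> {..?M} \<times> {..degree f}"
  proof
    fix x assume "x \<in> bsupp f"
    then obtain a b where x: "x = (a,b)" and nz: "coeff (coeff f b) a \<noteq> 0"
      by (auto simp: bsupp_def bcoeff_def)
    have "coeff f b \<noteq> 0" using nz by auto
    hence b: "b \<le> degree f" using le_degree by blast
    have "a \<le> degree (coeff f b)" using nz le_degree by blast
    also have "\<dots> \<le> ?M" using b by (intro Max_ge) auto
    finally show "x \<in> {..?M} \<times> {..degree f}" using x b by auto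
  qed
  thus ?thesis by (rule finite_subset) auto
qed

lemma bsupp_nonempty: "f \<noteq> 0 \<Longrightarrow> bsupp f \<noteq> {}"
proof -
  assume "f \<noteq> 0"
  then obtain b where "coeff f b \<noteq> 0" using poly_eq_iff by (metis coeff_0)
  then obtain a where "coeff (coeff f b) a \<noteq> 0" using poly_eq_iff by (metis coeff_0)
  thus ?thesis by (auto simp: bsupp_def bcoeff_def)
qed

lemma bcoeff_bmonom: "bcoeff (bmonom c a b) a' b' = (if a = a' \<and> b = b' then c else 0)"
  by (simp add: bcoeff_def bmonom_def)

lemma bcoeff_sum: "bcoeff (sum F A) a b = (\<Sum>x\<in>A. bcoeff (F x) a b)"
  by (simp add: bcoeff_def coeff_sum)

lemma bcoeff_initial:
  "bcoeff (initial f p q) a b =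
     (if p * real a + q * real b = wdeg f p q then bcoeff f a b else 0)"
proof -
  have "bcoeff (initial f p q) a b = (\<Sum>x\<in>bsupp f. if x = (a,b) then
      (if p * real a + q * real b = wdeg f p q then bcoeff f a b else 0) else 0)"
    unfolding initial_def bcoeff_sum
    by (intro sum.cong) (auto simp: bcoeff_bmonom split: if_splits)
  also have "\<dots> = (if p * real a + q * real b = wdeg f p q then bcoeff f a b else 0)"
    using bsupp_finite[of f] by (auto simp: bsupp_def)
  finally show ?thesis .
qed

lemma wdeg_ge: "bcoeff f a b \<noteq> 0 \<Longrightarrow> p * real a + q * real b \<le> wdeg f p q"
  unfolding wdeg_def using bsupp_finite[of f]
  by (intro Max_ge) (auto simp: bsupp_def)

lemma wdeg_attained: "f \<noteq> 0 \<Longrightarrow> \<exists>a b. bcoeff f a b \<noteq> 0 \<and> p * real a + q * real b = wdeg f p q"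
proof -
  assume "f \<noteq> 0"
  hence "wdeg f p q \<in> (\<lambda>(a, b). p * real a + q * real b) ` bsupp f"
    unfolding wdeg_def using bsupp_finite[of f] bsupp_nonempty by (intro Max_in) auto
  thus ?thesis by (fastforce simp: bsupp_def)
qed

lemma initial_nz: "f \<noteq> 0 \<Longrightarrow> initial f p q \<noteq> 0"
  using wdeg_attained[of f p q] bcoeff_initial[of f p q] by (metis bcoeff_0)


lemma initial_mult:
  assumes f: "f \<noteq> 0" and g: "g \<noteq> 0"
  shows "initial (f*g) p q = initial f p q * initial g p q"
proof -
  define w where "w = (\<lambda>a b. p * real a + q * real b)"
  define Df where "Df = wdeg f p q"
  define Dg where "Dg = wdeg g p q"
  have split: "w a b = w i j + w (a-i) (b-j)" if "i \<le> a" "j \<le> b" for a b i j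
    using that by (simp add: w_def of_nat_diff algebra_simps)
  have geF: "w i j \<le> Df" if "bcoeff f i j \<noteq> 0" for i j
    using wdeg_ge[OF that] by (simp add: w_def Df_def)
  have geG: "w i j \<le> Dg" if "bcoeff g i j \<noteq> 0" for i j
    using wdeg_ge[OF that] by (simp add: w_def Dg_def)
  have key: "bcoeff (initial f p q * initial g p q) a b =
      (if w a b = Df + Dg then bcoeff (f*g) a b else 0)" for a b
  proof (cases "w a b = Df + Dg")
    case True
    have "bcoeff (initial f p q * initial g p q) a b = bcoeff (f*g) a b"
      unfolding bcoeff_mult
    proof (intro sum.cong refl)
      fix j i assume j: "j \<in> {..b}" and i: "i \<in> {..a}"
      show "bcoeff (initial f p q) i j * bcoeff (initial g p q) (a - i) (b - j) =
            bcoeff f i j * bcoeff g (a - i) (b - j)"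
      proof (cases "bcoeff f i j * bcoeff g (a - i) (b - j) = 0")
        case True thus ?thesis by (auto simp: bcoeff_initial)
      next
        case False
        hence "w i j \<le> Df" "w (a-i) (b-j) \<le> Dg" using geF geG by auto
        moreover have "w a b = w i j + w (a-i) (b-j)" using split i j by auto
        ultimately have "w i j = Df" "w (a-i) (b-j) = Dg" using True by linarith+
        thus ?thesis by (simp add: bcoeff_initial w_def Df_def Dg_def)
      qed
    qed
    thus ?thesis using True by simp
  next
    case False
    have "bcoeff (initial f p q * initial g p q) a b = 0"
      unfolding bcoeff_mult
    proof (rule sum.neutral, rule ballI)
      fix j assume j: "j \<in> {..b}"
      show "(\<Sum>i\<le>a. bcoeff (initial f p q) i j * bcoeff (initial g p q) (a - i) (b - j)) = 0"
      proof (rule sum.neutral, rule ballI)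
        fix i assume i: "i \<in> {..a}"
        have "w a b = w i j + w (a-i) (b-j)" using split i j by auto
        thus "bcoeff (initial f p q) i j * bcoeff (initial g p q) (a - i) (b - j) = 0"
          using False by (auto simp: bcoeff_initial w_def Df_def Dg_def)
      qed
    qed
    thus ?thesis using False by simp
  qed
  have fg: "f * g \<noteq> 0" using f g by simp
  have "wdeg (f*g) p q \<le> Df + Dg"
  proof -
    obtain a b where ab: "bcoeff (f*g) a b \<noteq> 0" "w a b = wdeg (f*g) p q"
      using wdeg_attained[OF fg, of p q] by (auto simp: w_def)
    from ab(1) obtain j where j: "j \<le> b" and
      "(\<Sum>i\<le>a. bcoeff f i j * bcoeff g (a-i) (b-j)) \<noteq> 0"
      unfolding bcoeff_mult by (meson atMost_iff sum.neutral)
    then obtain i where i: "i \<le> a" and nz: "bcoeff f i j * bcoeff g (a-i) (b-j) \<noteq> 0"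
      by (meson atMost_iff sum.neutral)
    have "w a b = w i j + w (a-i) (b-j)" using split i j by auto
    moreover have "w i j \<le> Df" "w (a-i) (b-j) \<le> Dg" using nz geF geG by auto
    ultimately show ?thesis using ab by linarith
  qed
  moreover have "Df + Dg \<le> wdeg (f*g) p q"
  proof -
    have "initial f p q * initial g p q \<noteq> 0" using initial_nz f g by simp
    then obtain a b where "bcoeff (initial f p q * initial g p q) a b \<noteq> 0"
      using bipoly_eqI[of "initial f p q * initial g p q" 0] by auto
    hence "w a b = Df + Dg" "bcoeff (f*g) a b \<noteq> 0" using key[of a b] by (auto split: if_splits)
    thus ?thesis using wdeg_ge[of "f*g" a b p q] by (simp add: w_def)
  qed
  ultimately have D: "wdeg (f*g) p q = Df + Dg" by simp
  show ?thesis
    by (rule bipoly_eqI) (simp add: key bcoeff_initial D w_def)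
qed


lemma beval_alt: "beval f x y = poly (poly f [:y:]) x"
  unfolding beval_def
  by (induction f rule: pCons_induct) (simp_all add: map_poly_pCons)

lemma beval_mult: "beval (f*g) x y = beval f x y * beval g x y"
  by (simp add: beval_alt)

lemma beval_add: "beval (f+g) x y = beval f x y + beval g x y"
  by (simp add: beval_alt)

lemma dX_mult: "dX (f*g) = dX f * g + f * dX g"
  unfolding dX_def
proof (rule poly_eqI)
  fix n
  have "coeff (map_poly pderiv (f * g)) n = (\<Sum>i\<le>n. pderiv (coeff f i * coeff g (n - i)))"
    by (simp add: coeff_map_poly coeff_mult pderiv_sum')
  also have "\<dots> = (\<Sum>i\<le>n. pderiv (coeff f i) * coeff g (n - i) + coeff f i * pderiv (coeff g (n - i)))"
    by (intro sum.cong refl) (simp add: pderiv_mult algebra_simps)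
  also have "\<dots> = coeff (map_poly pderiv f * g + f * map_poly pderiv g) n"
    by (simp only: coeff_add coeff_mult sum.distrib coeff_map_poly pderiv_0)
  finally show "coeff (map_poly pderiv (f * g)) n = coeff (map_poly pderiv f * g + f * map_poly pderiv g) n" .
qed

lemma dY_mult: "dY (f*g) = dY f * g + f * dY g"
  unfolding dY_def by (simp add: pderiv_mult algebra_simps)


lemma pos_degree_nz: "pos_degree g \<Longrightarrow> g \<noteq> 0"
  by (auto simp: pos_degree_def bsupp_def)

definition psi :: "bipoly \<Rightarrow> complex poly" where
  "psi u = map_poly (\<lambda>p. coeff p 0) u"

lemma coeff_psi: "coeff (psi u) b = bcoeff u 0 b"
  by (simp add: psi_def coeff_map_poly bcoeff_def)

lemma psi_mult: "psi (g*k) = psi g * psi k"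
  by (rule poly_eqI) (simp add: coeff_psi bcoeff_mult coeff_mult)

lemma qc_dvd:
  assumes qf: "quasi_convenient f" and d: "g dvd f" and pg: "pos_degree g"
  shows "quasi_convenient g"
proof -
  obtain k where fk: "f = g * k" using d by blast
  from qf obtain a where a: "bcoeff f a 0 \<noteq> 0" by (auto simp: quasi_convenient_def)
  hence "coeff f 0 \<noteq> 0" by (auto simp: bcoeff_def)
  hence "coeff g 0 \<noteq> 0" using fk by (auto simp: coeff_mult_0)
  then obtain a' where a': "bcoeff g a' 0 \<noteq> 0"
    by (metis bcoeff_def coeff_0 poly_eq_iff)
  from qf obtain b where b: "bcoeff f 0 b \<noteq> 0" by (auto simp: quasi_convenient_def)
  hence "psi f \<noteq> 0" by (metis coeff_psi coeff_0)
  hence "psi g \<noteq> 0" using fk psi_mult by auto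
  then obtain b' where b': "bcoeff g 0 b' \<noteq> 0"
    by (metis coeff_psi coeff_0 poly_eq_iff)
  show ?thesis using a' b' pg pos_degree_nz[OF pg] by (auto simp: quasi_convenient_def)
qed

theorem lemma3p1:
  fixes f g h :: bipoly
  assumes "quasi_convenient f" and "nondeg_infty f"
    and "pos_degree g" and "pos_degree h"
    and "coprime g h" and "g dvd f" and "h dvd f"
  shows "quasi_convenient g \<and> quasi_convenient h \<and> pair_nondeg_infty g h"
proof -
  have qg: "quasi_convenient g" using qc_dvd[OF assms(1) assms(6) assms(3)] .
  have qh: "quasi_convenient h" using qc_dvd[OF assms(1) assms(7) assms(4)] .
  have "g * h dvd f" using divides_mult[OF assms(6) assms(7) assms(5)] .
  then obtain k where fk: "f = g * h * k" by blast
  have f0: "f \<noteq> 0" using assms(1) by (simp add: quasi_convenient_def)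
  have g0: "g \<noteq> 0" and h0: "h \<noteq> 0" using pos_degree_nz assms by auto
  have k0: "k \<noteq> 0" using f0 fk by auto
  have "\<not> (\<exists>x y. x \<noteq> 0 \<and> y \<noteq> 0 \<and> beval (initial g p q) x y = 0 \<and>
              beval (initial h p q) x y = 0)" if pq: "p > 0 \<or> q > 0" for p q
  proof
    assume "\<exists>x y. x \<noteq> 0 \<and> y \<noteq> 0 \<and> beval (initial g p q) x y = 0 \<and>
              beval (initial h p q) x y = 0"
    then obtain x y where xy: "x \<noteq> 0" "y \<noteq> 0" and zg: "beval (initial g p q) x y = 0"
      and zh: "beval (initial h p q) x y = 0" by blast
    define A where "A = initial g p q"
    define B where "B = initial h p q * initial k p q"
    have inf: "initial f p q = A * B"
      using fk g0 h0 k0 by (simp add: initial_mult A_def B_def mult.assoc)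
    have zA: "beval A x y = 0" using zg by (simp add: A_def)
    have zB: "beval B x y = 0" using zh by (simp add: B_def beval_mult)
    have "beval (initial f p q) x y = 0" "beval (dX (initial f p q)) x y = 0"
      "beval (dY (initial f p q)) x y = 0"
      using zA zB by (simp_all add: inf beval_mult beval_add dX_mult dY_mult)
    thus False using assms(2) pq xy unfolding nondeg_infty_def by metis
  qed
  thus ?thesis using qg qh by (simp add: pair_nondeg_infty_def)
qed

end
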